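(* Let $\mathcal{G}$ be a MAG and let $H,H'$ be heads with maximal vertex $i$. Suppose $K^m$ is a set with $H\to^{K^m}H'$ such that $K^m\subseteq K$ for every $K$ with $H\to^KH'$. Then for $\emptyset\ne K\subseteq H\setminus\{i\}$, we have $H\to^KH'$ if and only if $K=K^m\,\dot\cup\,B$ for some $B\subseteq H\setminus(H'\cup K^m)$.
   Context: A MAG is an acyclic directed mixed graph (directed and bidirected edges, no directed cycles) with $\mathrm{sib}(v)\cap\mathrm{an}(v)=\emptyset$ for all $v$ and in which every nonadjacent pair is m-separated by some set. Vertices are numbered topologically. $\mathrm{barren}_{\mathcal{G}'}(W)=\{w\in W:\mathrm{de}_{\mathcal{G}'}(w)\cap W=\{w\}\}$; a nonempty $H$ is a head if $\mathrm{barren}(H)=H$ and $H$ lies in one district of $\mathcal{G}_{\mathrm{an}(H)}$. For a head $H$ with maximal vertex $i$ and $\emptyset\ne K\subseteq H\setminus\{i\}$, $H\to^KH'$ means $H'=\mathrm{barren}_{\mathcal{G}'}(\mathrm{dis}_{\mathcal{G}'}(i))$ where $\mathcal{G}'=\mathcal{G}_{\mathrm{an}(H)\setminus K}$. $\dot\cup$ denotes disjoint union. *)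

theory Defs
  imports Main
begin

text \<open>Mixed graphs on natural-number vertices: directed edges (a,b) meaning a \<rightarrow> b,
  bidirected edges stored symmetrically.\<close>

record mixed_graph =
  verts :: "nat set"
  dedges :: "(nat \<times> nat) set"
  bedges :: "(nat \<times> nat) set"

definition induced :: "mixed_graph \<Rightarrow> nat set \<Rightarrow> mixed_graph" where
  "induced G W = \<lparr>verts = verts G \<inter> W, dedges = dedges G \<inter> (W \<times> W),
                   bedges = bedges G \<inter> (W \<times> W)\<rparr>"

definition an :: "mixed_graph \<Rightarrow> nat \<Rightarrow> nat set" where
  "an G v = {u \<in> verts G. (u, v) \<in> (dedges G)\<^sup>*}"

definition an_set :: "mixed_graph \<Rightarrow> nat set \<Rightarrow> nat set" where
  "an_set G W = (\<Union>v\<in>W. an G v)"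

definition de :: "mixed_graph \<Rightarrow> nat \<Rightarrow> nat set" where
  "de G v = {u \<in> verts G. (v, u) \<in> (dedges G)\<^sup>*}"

definition sib :: "mixed_graph \<Rightarrow> nat \<Rightarrow> nat set" where
  "sib G v = {u. (u, v) \<in> bedges G}"

definition dis :: "mixed_graph \<Rightarrow> nat \<Rightarrow> nat set" where
  "dis G v = {u \<in> verts G. (v, u) \<in> (bedges G)\<^sup>*}"

definition barren :: "mixed_graph \<Rightarrow> nat set \<Rightarrow> nat set" where
  "barren G W = {w \<in> W. de G w \<inter> W = {w}}"

definition is_head :: "mixed_graph \<Rightarrow> nat set \<Rightarrow> bool" where
  "is_head G H \<longleftrightarrow> H \<noteq> {} \<and> H \<subseteq> verts G \<and> barren G H = H \<and>
     (\<exists>v \<in> an_set G H. H \<subseteq> dis (induced G (an_set G H)) v)"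

datatype ekind = Fwd | Bwd | Bi

fun edge_ok :: "mixed_graph \<Rightarrow> ekind \<Rightarrow> nat \<Rightarrow> nat \<Rightarrow> bool" where
  "edge_ok G Fwd u v = ((u, v) \<in> dedges G)"
| "edge_ok G Bwd u v = ((v, u) \<in> dedges G)"
| "edge_ok G Bi u v = ((u, v) \<in> bedges G)"

definition valid_path :: "mixed_graph \<Rightarrow> nat list \<Rightarrow> ekind list \<Rightarrow> bool" where
  "valid_path G vs ks \<longleftrightarrow> length vs = Suc (length ks) \<and> distinct vs \<and> set vs \<subseteq> verts G \<and>
     (\<forall>j < length ks. edge_ok G (ks ! j) (vs ! j) (vs ! Suc j))"

text \<open>Internal vertex j (0 < j < length ks) is a collider if both adjacent edges have arrowheads at it.\<close>
definition collider :: "ekind list \<Rightarrow> nat \<Rightarrow> bool" where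
  "collider ks j \<longleftrightarrow> ks ! (j - 1) \<noteq> Bwd \<and> ks ! j \<noteq> Fwd"

definition m_connecting :: "mixed_graph \<Rightarrow> nat set \<Rightarrow> nat \<Rightarrow> nat \<Rightarrow> nat list \<Rightarrow> ekind list \<Rightarrow> bool" where
  "m_connecting G Z a b vs ks \<longleftrightarrow> valid_path G vs ks \<and> hd vs = a \<and> last vs = b \<and>
     (\<forall>j. 0 < j \<and> j < length ks \<longrightarrow>
        (collider ks j \<longrightarrow> vs ! j \<in> an_set G Z) \<and> (\<not> collider ks j \<longrightarrow> vs ! j \<notin> Z))"

definition m_separated :: "mixed_graph \<Rightarrow> nat \<Rightarrow> nat \<Rightarrow> nat set \<Rightarrow> bool" where
  "m_separated G a b Z \<longleftrightarrow> \<not> (\<exists>vs ks. m_connecting G Z a b vs ks)"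

definition adjacent :: "mixed_graph \<Rightarrow> nat \<Rightarrow> nat \<Rightarrow> bool" where
  "adjacent G a b \<longleftrightarrow> (a, b) \<in> dedges G \<or> (b, a) \<in> dedges G \<or> (a, b) \<in> bedges G"

definition topologically_numbered :: "mixed_graph \<Rightarrow> bool" where
  "topologically_numbered G \<longleftrightarrow> (\<forall>(a, b) \<in> dedges G. a < b)"

definition is_MAG :: "mixed_graph \<Rightarrow> bool" where
  "is_MAG G \<longleftrightarrow> finite (verts G) \<and> dedges G \<subseteq> verts G \<times> verts G \<and>
     bedges G \<subseteq> verts G \<times> verts G \<and> sym (bedges G) \<and>
     acyclic (dedges G) \<and>
     (\<forall>v \<in> verts G. sib G v \<inter> an G v = {}) \<and>
     (\<forall>a \<in> verts G. \<forall>b \<in> verts G. a \<noteq> b \<and> \<not> adjacent G a b \<longrightarrow>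
        (\<exists>Z \<subseteq> verts G - {a, b}. m_separated G a b Z))"

definition head_step :: "mixed_graph \<Rightarrow> nat set \<Rightarrow> nat set \<Rightarrow> nat set \<Rightarrow> bool" where
  "head_step G H K H' \<longleftrightarrow>
     (let i = Max H; G' = induced G (an_set G H - K) in
      K \<noteq> {} \<and> K \<subseteq> H - {i} \<and> H' = barren G' (dis G' i))"

end

theory Submission
  imports Defs
begin

lemma topo_le:
  assumes "topologically_numbered G" "(x, y) \<in> (dedges G)\<^sup>*"
  shows "x \<le> y"
  using assms(2)
proof (induction rule: rtrancl_induct)
  case base then show ?case by simp
next
  case (step y z)
  then show ?case using assms(1) unfolding topologically_numbered_def by fastforce
qed

lemma induced_simps[simp]:
  "verts (induced G W) = verts G \<inter> W"
  "dedges (induced G W) = dedges G \<inter> (W \<times> W)"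
  "bedges (induced G W) = bedges G \<inter> (W \<times> W)"
  by (simp_all add: induced_def)

lemma rtrancl_sub: "(a, b) \<in> (R \<inter> S)\<^sup>* \<Longrightarrow> (a, b) \<in> R\<^sup>*"
  by (metis Int_lower1 rtrancl_mono subsetD)

theorem lemmaC3:
  fixes G :: mixed_graph and H H' Km :: "nat set" and i :: nat
  assumes "is_MAG G" and "topologically_numbered G"
    and "is_head G H" and "is_head G H'"
    and "Max H = i" and "Max H' = i"
    and "head_step G H Km H'"
    and "\<forall>K. head_step G H K H' \<longrightarrow> Km \<subseteq> K"
  shows "\<forall>K. K \<noteq> {} \<and> K \<subseteq> H - {i} \<longrightarrow>
           (head_step G H K H' \<longleftrightarrow>
             (\<exists>B. B \<subseteq> H - (H' \<union> Km) \<and> Km \<inter> B = {} \<and> K = Km \<union> B))"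
proof (intro allI impI)
  fix K assume K: "K \<noteq> {} \<and> K \<subseteq> H - {i}"
  have hs: "Km \<noteq> {}" "Km \<subseteq> H - {i}"
    "H' = barren (induced G (an_set G H - Km)) (dis (induced G (an_set G H - Km)) i)"
    using assms(7) assms(5) unfolding head_step_def Let_def by auto
  have bar: "\<And>b. b \<in> H \<Longrightarrow> de G b \<inter> H = {b}"
    using assms(3) unfolding is_head_def barren_def by blast
  have Hv: "H \<subseteq> verts G" using assms(3) unfolding is_head_def by blast
  have dv: "dedges G \<subseteq> verts G \<times> verts G" and bv: "bedges G \<subseteq> verts G \<times> verts G"
    using assms(1) unfolding is_MAG_def by auto
  show "head_step G H K H' \<longleftrightarrow>
             (\<exists>B. B \<subseteq> H - (H' \<union> Km) \<and> Km \<inter> B = {} \<and> K = Km \<union> B)"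
  proof
    assume st: "head_step G H K H'"
    then have "Km \<subseteq> K" using assms(8) by blast
    moreover have "H' \<inter> K = {}"
      using st assms(5) unfolding head_step_def Let_def barren_def dis_def by auto
    ultimately show "\<exists>B. B \<subseteq> H - (H' \<union> Km) \<and> Km \<inter> B = {} \<and> K = Km \<union> B"
      using K by (intro exI[of _ "K - Km"]) auto
  next
    assume "\<exists>B. B \<subseteq> H - (H' \<union> Km) \<and> Km \<inter> B = {} \<and> K = Km \<union> B"
    then obtain B where B: "B \<subseteq> H - (H' \<union> Km)" "K = Km \<union> B" by blast
    define W1 where "W1 = an_set G H - Km"
    define G1 where "G1 = induced G W1"
    define G2 where "G2 = induced G (W1 - B)"
    define D1 where "D1 = dis G1 i"
    have G2eq: "induced G (an_set G H - K) = G2"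
      unfolding G2_def W1_def B(2) by (simp add: Diff_Un Diff_Int_distrib2 set_diff_eq) 
    have H'eq: "H' = barren G1 D1" using hs(3) unfolding G1_def D1_def W1_def .
    have star: "d = b" if b: "b \<in> B" and d: "d \<in> verts G1" and p: "(b, d) \<in> (dedges G1)\<^sup>*" for b d
    proof -
      have "d \<in> an_set G H" using d unfolding G1_def W1_def by simp
      then obtain h where h: "h \<in> H" "(d, h) \<in> (dedges G)\<^sup>*"
        unfolding an_set_def an_def by blast
      have bd: "(b, d) \<in> (dedges G)\<^sup>*" using p unfolding G1_def by (simp add: rtrancl_sub)
      have "h \<in> de G b" using h Hv bd unfolding de_def by auto
      then have "h = b" using bar[of b] b B(1) h(1) by blast
      moreover have "b \<le> d" "d \<le> h" using topo_le[OF assms(2)] bd h(2) by auto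
      ultimately show ?thesis by simp
    qed
    have D1v: "D1 \<subseteq> verts G1" unfolding D1_def dis_def by auto
    have BD: "B \<inter> D1 = {}"
    proof (rule ccontr)
      assume "B \<inter> D1 \<noteq> {}"
      then obtain b where b: "b \<in> B" "b \<in> D1" by blast
      have "b \<notin> H'" using B(1) b by blast
      then have "de G1 b \<inter> D1 \<noteq> {b}" using b H'eq unfolding barren_def by blast
      moreover have "b \<in> de G1 b" using b D1v unfolding de_def by auto
      ultimately obtain d where "d \<in> de G1 b" "d \<in> D1" "d \<noteq> b" using b by blast
      then show False using star[OF b(1)] unfolding de_def by blast
    qed
    have disq: "dis G2 i = D1"
    proof
      show "dis G2 i \<subseteq> D1"
        unfolding D1_def dis_def G1_def G2_def
        by (auto intro: rtrancl_mono[THEN subsetD, rotated])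
    next
      have "(i, u) \<in> (bedges G2)\<^sup>*" if "(i, u) \<in> (bedges G1)\<^sup>*" "u \<in> verts G1" for u
        using that
      proof (induction rule: rtrancl_induct)
        case base then show ?case by simp
      next
        case (step y z)
        have yv: "y \<in> verts G1" "z \<in> verts G1"
          using step(2) bv unfolding G1_def by auto
        have "y \<in> D1" "z \<in> D1" using yv step(1,2) unfolding D1_def dis_def by auto
        then have "y \<notin> B" "z \<notin> B" using BD by auto
        then have "(y, z) \<in> bedges G2" using step(2) unfolding G1_def G2_def by auto
        then show ?case using step(3) yv by (meson rtrancl.rtrancl_into_rtrancl)
      qed
      then show "D1 \<subseteq> dis G2 i"
        using BD unfolding D1_def dis_def G1_def G2_def by auto
    qed
    have deq: "de G2 w \<inter> D1 = de G1 w \<inter> D1" if w: "w \<in> D1" for w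
    proof
      show "de G2 w \<inter> D1 \<subseteq> de G1 w \<inter> D1"
        unfolding de_def G1_def G2_def
        by (auto intro: rtrancl_mono[THEN subsetD, rotated])
    next
      show "de G1 w \<inter> D1 \<subseteq> de G2 w \<inter> D1"
      proof
        fix u assume u: "u \<in> de G1 w \<inter> D1"
        then have uv: "u \<in> verts G1" "(w, u) \<in> (dedges G1)\<^sup>*" unfolding de_def by auto
        have uB: "u \<notin> B" using u BD by blast
        have "(z, u) \<in> (dedges G1)\<^sup>* \<longrightarrow> (w, z) \<in> (dedges G2)\<^sup>*"
          if "(w, z) \<in> (dedges G1)\<^sup>*" for z
          using that
        proof (induction rule: rtrancl_induct)
          case base then show ?case by simp
        next
          case (step y z)
          show ?case
          proof
            assume zu: "(z, u) \<in> (dedges G1)\<^sup>*"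
            have yu: "(y, u) \<in> (dedges G1)\<^sup>*" using step(2) zu by auto
            have "y \<notin> B" using star[OF _ uv(1) yu] uB by blast
            moreover have "z \<notin> B" using star[OF _ uv(1) zu] uB by blast
            ultimately have "(y, z) \<in> dedges G2" using step(2) unfolding G1_def G2_def by auto
            then show "(w, z) \<in> (dedges G2)\<^sup>*" using step(3) yu by auto
          qed
        qed
        then have "(w, u) \<in> (dedges G2)\<^sup>*" using uv by blast
        moreover have "u \<in> verts G2" using uv uB unfolding G1_def G2_def by auto
        ultimately show "u \<in> de G2 w \<inter> D1" using u unfolding de_def by auto
      qed
    qed
    have "barren G2 D1 = barren G1 D1"
      unfolding barren_def using deq by auto
    then have "H' = barren G2 (dis G2 i)" using H'eq disq by simp
    then show "head_step G H K H'"
      unfolding head_step_def Let_def using assms(5) K G2eq by simp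
  qed
qed

end
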